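(* Consider the scoring two-player Tower of Hanoi game on three pegs with real weights $w_{12},w_{13},w_{23}$. (a) Let $n=2$. Consider the inequalities (1) $w_{12}+w_{23}-w_{13}>0$; (2) $3w_{13}-w_{12}-w_{23}>0$; (3) $w_{13}+w_{23}-w_{12}>0$; (4) $3w_{12}-w_{13}-w_{23}>0$; (5) $w_{12}+w_{13}-w_{23}>0$. Under (EC4) or (EC5), the first player wins if at least one of (1)–(5) holds. Under (EC2) or (EC3), the first player wins if (5) holds. Under (EC1) with final peg Peg 3, the first player wins if (1) or (2) holds. In all other cases the game is a draw. (b) Let $n=1$ (so (EC2), (EC3) are not applicable). Under (EC1) with final peg Peg 3, the first player wins if $w_{13}>0$, loses if $w_{13}<0$, and the game is a tie if $w_{13}=0$. Under (EC4) or (EC5), the second player wins if $w_{12}<0$ and $w_{13}<0$; the game is a tie if at least one of $w_{12},w_{13}$ equals $0$ and both are non-positive; otherwise the first player wins.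
   Context: Tower of Hanoi on three pegs (labeled 1, 2, 3) with $n$ disks of pairwise distinct sizes: a position assigns each disk to a peg, disks on each peg stacked with sizes decreasing from bottom to top. A legal move transfers the top disk of one peg to a different peg that is empty or has a larger top disk; a move from Peg $i$ to Peg $j$ or from Peg $j$ to Peg $i$ is a move along edge $\{i,j\}$. A tower position is one with all disks on one peg. Two-player game: Anh (first player) and Bao (second player) alternate moves starting from the position with all disks on Peg 1; a player may not move the disk that the opponent moved in the immediately preceding move. The game ends when the tower has been transferred to a final peg, according to one fixed ending condition: (EC1) all disks on a given peg distinct from Peg 1; (EC2) all disks on Peg 1, the largest disk having been moved at least once; (EC3) all disks on Peg 1, the smallest disk having been moved at least once; (EC4) all disks on any peg, the largest disk having been moved at least once; (EC5) all disks on any peg, the smallest disk having been moved at least once. A move creating a tower position that does not end the game (tower on a non-final peg) is not allowed; (EC2), (EC3) are not applicable for $n=1$. Scoring play: real weights $w_{12},w_{13},w_{23}$ are given (with $w_{ij}=w_{ji}$); a player making a move along edge $\{i,j\}$ earns $w_{ij}$ points. When the game ends, the player with strictly more points wins, and equal points is a tie. A player "wins" the game if she/he has a strategy forcing the game to end with her/his victory; if neither player can force the game to terminate in a victory for her/himself, the game is a draw. *)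

theory Defs
  imports Main "HOL.Real"
begin

text \<open>Disks are 0,...,n-1; disk d has size d (disk 0 smallest, disk n-1 largest).
  Pegs are 1, 2, 3. A configuration assigns to each disk its peg (only disks below n matter);
  the stacking order on each peg is forced by the sizes.\<close>

datatype ending = EC1 nat | EC2 | EC3 | EC4 | EC5

text \<open>Game state: configuration, disk moved in the immediately preceding move,
  whose turn (True = Anh, the first player), score difference (Anh's points minus Bao's),
  whether the largest disk has been moved, whether the smallest disk has been moved.\<close>
datatype state = St (conf: "nat \<Rightarrow> nat") (lastd: "nat option") (aturn: bool)
  (dif: real) (bigm: bool) (smallm: bool)

definition wt :: "real \<Rightarrow> real \<Rightarrow> real \<Rightarrow> nat \<Rightarrow> nat \<Rightarrow> real" where
  "wt w12 w13 w23 i j =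
     (if {i, j} = {1, 2} then w12 else if {i, j} = {1, 3} then w13 else w23)"

definition tower :: "nat \<Rightarrow> (nat \<Rightarrow> nat) \<Rightarrow> nat \<Rightarrow> bool" where
  "tower n c p \<longleftrightarrow> (\<forall>e<n. c e = p)"

text \<open>Hanoi legality of moving disk d to peg q (d is the top disk of its peg, the target peg
  is empty or has a larger top disk, i.e. all smaller disks lie on the third peg), plus the
  rule that the disk moved by the opponent in the preceding move may not be moved.\<close>
definition legal :: "nat \<Rightarrow> state \<Rightarrow> nat \<Rightarrow> nat \<Rightarrow> bool" where
  "legal n s d q \<longleftrightarrow> d < n \<and> q \<in> {1, 2, 3} \<and> q \<noteq> conf s d \<and>
     (\<forall>e<d. conf s e \<noteq> conf s d \<and> conf s e \<noteq> q) \<and> lastd s \<noteq> Some d"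

definition next_state :: "nat \<Rightarrow> (nat \<Rightarrow> nat \<Rightarrow> real) \<Rightarrow> state \<Rightarrow> nat \<Rightarrow> nat \<Rightarrow> state" where
  "next_state n W s d q =
     St ((conf s)(d := q)) (Some d) (\<not> aturn s)
        (dif s + (if aturn s then 1 else -1) * W (conf s d) q)
        (bigm s \<or> d = n - 1) (smallm s \<or> d = 0)"

definition ends :: "ending \<Rightarrow> nat \<Rightarrow> state \<Rightarrow> nat \<Rightarrow> nat \<Rightarrow> bool" where
  "ends ec n s d q \<longleftrightarrow> tower n ((conf s)(d := q)) q \<and>
     (case ec of
        EC1 f \<Rightarrow> q = f
      | EC2 \<Rightarrow> q = 1 \<and> (bigm s \<or> d = n - 1)
      | EC3 \<Rightarrow> q = 1 \<and> (smallm s \<or> d = 0)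
      | EC4 \<Rightarrow> bigm s \<or> d = n - 1
      | EC5 \<Rightarrow> smallm s \<or> d = 0)"

definition allowed :: "ending \<Rightarrow> nat \<Rightarrow> state \<Rightarrow> nat \<Rightarrow> nat \<Rightarrow> bool" where
  "allowed ec n s d q \<longleftrightarrow> legal n s d q \<and>
     (tower n ((conf s)(d := q)) q \<longrightarrow> ends ec n s d q)"

text \<open>forces ec n W P G s: player P (True = Anh, False = Bao) has a strategy from state s
  forcing the game to end (after finitely many moves) with final score difference
  satisfying G.  (Least fixed point = attractor of the reachability game.)\<close>
inductive forces :: "ending \<Rightarrow> nat \<Rightarrow> (nat \<Rightarrow> nat \<Rightarrow> real) \<Rightarrow> bool \<Rightarrow> (real \<Rightarrow> bool) \<Rightarrow> state \<Rightarrow> bool"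
  for ec n W P G where
  own: "aturn s = P \<Longrightarrow> allowed ec n s d q \<Longrightarrow>
        (ends ec n s d q \<and> G (dif (next_state n W s d q))) \<or>
        (\<not> ends ec n s d q \<and> forces ec n W P G (next_state n W s d q)) \<Longrightarrow>
        forces ec n W P G s"
| opp: "aturn s \<noteq> P \<Longrightarrow> (\<exists>d q. allowed ec n s d q) \<Longrightarrow>
        (\<forall>d q. allowed ec n s d q \<longrightarrow>
           (ends ec n s d q \<and> G (dif (next_state n W s d q))) \<or>
           (\<not> ends ec n s d q \<and> forces ec n W P G (next_state n W s d q))) \<Longrightarrow>
        forces ec n W P G s"

definition init :: state where
  "init = St (\<lambda>_. 1) None True 0 False False"

definition anh_wins :: "ending \<Rightarrow> nat \<Rightarrow> (nat \<Rightarrow> nat \<Rightarrow> real) \<Rightarrow> bool" where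
  "anh_wins ec n W \<longleftrightarrow> forces ec n W True (\<lambda>x. x > 0) init"

definition bao_wins :: "ending \<Rightarrow> nat \<Rightarrow> (nat \<Rightarrow> nat \<Rightarrow> real) \<Rightarrow> bool" where
  "bao_wins ec n W \<longleftrightarrow> forces ec n W False (\<lambda>x. x < 0) init"

definition is_draw :: "ending \<Rightarrow> nat \<Rightarrow> (nat \<Rightarrow> nat \<Rightarrow> real) \<Rightarrow> bool" where
  "is_draw ec n W \<longleftrightarrow> \<not> anh_wins ec n W \<and> \<not> bao_wins ec n W"

definition is_tie :: "ending \<Rightarrow> nat \<Rightarrow> (nat \<Rightarrow> nat \<Rightarrow> real) \<Rightarrow> bool" where
  "is_tie ec n W \<longleftrightarrow> forces ec n W True (\<lambda>x. x \<ge> 0) init \<and>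
                      forces ec n W False (\<lambda>x. x \<le> 0) init"

end

theory Submission imports Defs begin

lemma wt_simps[simp]:
  "wt a b c 1 2 = a" "wt a b c 2 1 = a" "wt a b c 1 3 = b" "wt a b c 3 1 = b"
  "wt a b c 2 3 = c" "wt a b c 3 2 = c"
  "wt a b c (Suc 0) 2 = a" "wt a b c 2 (Suc 0) = a" "wt a b c (Suc 0) 3 = b" "wt a b c 3 (Suc 0) = b"
  by (auto simp: wt_def doubleton_eq_iff)

lemma less2: "(d::nat) < 2 \<longleftrightarrow> d = 0 \<or> d = 1" by auto
lemma all_less1: "(\<forall>e<(1::nat). P e) = P 0" by auto
lemma all_less0: "(\<forall>e<(0::nat). P e) = True" by auto
lemma tower2: "tower 2 c p \<longleftrightarrow> c 0 = p \<and> c 1 = p"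
  by (auto simp: tower_def less2)
lemma tower1: "tower (Suc 0) c p \<longleftrightarrow> c 0 = p"
  by (auto simp: tower_def)

definition E1 :: "real \<Rightarrow> real \<Rightarrow> real \<Rightarrow> real" where "E1 a b c = a + c - b"
definition E2 :: "real \<Rightarrow> real \<Rightarrow> real \<Rightarrow> real" where "E2 a b c = 3*b - a - c"
definition E3 :: "real \<Rightarrow> real \<Rightarrow> real \<Rightarrow> real" where "E3 a b c = b + c - a"
definition E4 :: "real \<Rightarrow> real \<Rightarrow> real \<Rightarrow> real" where "E4 a b c = 3*a - b - c"
definition E5 :: "real \<Rightarrow> real \<Rightarrow> real \<Rightarrow> real" where "E5 a b c = a + b - c"

definition EV :: "real \<Rightarrow> real \<Rightarrow> real \<Rightarrow> ending \<Rightarrow> real set" where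
  "EV a b c ec = (case ec of EC1 _ \<Rightarrow> {E1 a b c, E2 a b c} | EC2 \<Rightarrow> {E5 a b c}
     | EC3 \<Rightarrow> {E5 a b c} | _ \<Rightarrow> {E1 a b c, E2 a b c, E3 a b c, E4 a b c, E5 a b c})"

definition pat :: "state \<Rightarrow> nat \<Rightarrow> nat \<Rightarrow> bool \<Rightarrow> real \<Rightarrow> bool" where
  "pat s x y t D \<longleftrightarrow> conf s 0 = x \<and> conf s 1 = y \<and> lastd s = Some (if t then 1 else 0)
     \<and> aturn s = t \<and> dif s = D \<and> smallm s \<and> (t \<longrightarrow> bigm s)"

definition inv2 :: "real \<Rightarrow> real \<Rightarrow> real \<Rightarrow> state \<Rightarrow> bool" where
  "inv2 a b c s \<longleftrightarrow> s = init
   \<or> pat s 2 3 True (a - b) \<or> pat s 1 2 True (2*a - b - c) \<or> pat s 3 1 True (a - c)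
   \<or> pat s 3 2 True (b - a) \<or> pat s 1 3 True (2*b - a - c) \<or> pat s 2 1 True (b - c)
   \<or> pat s 2 1 False a \<or> pat s 1 3 False (2*a - b) \<or> pat s 3 2 False (2*a - c)
   \<or> pat s 3 1 False b \<or> pat s 1 2 False (2*b - a) \<or> pat s 2 3 False (2*b - c)"

lemma stepA:
  assumes "inv2 a b c s" "allowed ec 2 s d q" "ec \<in> {EC1 3, EC2, EC3, EC4, EC5}"
  shows "(ends ec 2 s d q \<longrightarrow> aturn s \<and> dif (next_state 2 (wt a b c) s d q) \<in> EV a b c ec)
     \<and> (\<not> ends ec 2 s d q \<longrightarrow> inv2 a b c (next_state 2 (wt a b c) s d q))"
  using assms
  unfolding inv2_def pat_def allowed_def legal_def ends_def next_state_def EV_def E1_def E2_def E3_def E4_def E5_def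
  apply (simp add: less2 tower2 init_def)
  apply (elim disjE conjE)
  apply (auto simp: algebra_simps)
  done

lemma own_cont: "aturn s = P \<Longrightarrow> allowed ec n s d q \<Longrightarrow> \<not> ends ec n s d q \<Longrightarrow>
  forces ec n W P G (next_state n W s d q) \<Longrightarrow> forces ec n W P G s"
  by (rule forces.own) auto
lemma own_end: "aturn s = P \<Longrightarrow> allowed ec n s d q \<Longrightarrow> ends ec n s d q \<Longrightarrow>
  G (dif (next_state n W s d q)) \<Longrightarrow> forces ec n W P G s"
  by (rule forces.own) auto
lemma opp_unique: "aturn s \<noteq> P \<Longrightarrow> allowed ec n s d q \<Longrightarrow>
  (\<forall>d' q'. allowed ec n s d' q' \<longrightarrow> d' = d \<and> q' = q) \<Longrightarrow> \<not> ends ec n s d q \<Longrightarrow>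
  forces ec n W P G (next_state n W s d q) \<Longrightarrow> forces ec n W P G s"
  by (rule forces.opp) blast+

lemmas D = allowed_def legal_def ends_def next_state_def init_def less2 tower2 all_less1

lemma win_E5: assumes "E5 a b c > 0" "ec \<in> {EC2,EC3,EC4,EC5}"
  shows "forces ec 2 (wt a b c) True (\<lambda>x. x > 0) init"
  apply (rule own_cont[where d=0 and q=2])
  using assms(2) apply (auto simp: D)[3]
  apply (rule opp_unique[where d=1 and q=3])
  using assms(2) apply (auto simp: D)[4]
  apply (rule own_cont[where d=0 and q=1])
  using assms(2) apply (auto simp: D)[3]
  apply (rule opp_unique[where d=1 and q=2])
  using assms(2) apply (auto simp: D)[4]
  apply (rule own_cont[where d=0 and q=3])
  using assms(2) apply (auto simp: D)[3]
  apply (rule opp_unique[where d=1 and q=1])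
  using assms(2) apply (auto simp: D)[4]
  apply (rule own_end[where d=0 and q=1])
  using assms apply (auto simp: D E5_def)
  done

lemma win_E1: assumes "E1 a b c > 0" "ec \<in> {EC1 3,EC4,EC5}"
  shows "forces ec 2 (wt a b c) True (\<lambda>x. x > 0) init"
  apply (rule own_cont[where d=0 and q=2])
  using assms(2) apply (auto simp: D)[3]
  apply (rule opp_unique[where d=1 and q=3])
  using assms(2) apply (auto simp: D)[4]
  apply (rule own_end[where d=0 and q=3])
  using assms apply (auto simp: D E1_def)
  done

lemma win_E4: assumes "E4 a b c > 0" "ec \<in> {EC4,EC5}"
  shows "forces ec 2 (wt a b c) True (\<lambda>x. x > 0) init"
  apply (rule own_cont[where d=0 and q=2])
  using assms(2) apply (auto simp: D)[3]
  apply (rule opp_unique[where d=1 and q=3])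
  using assms(2) apply (auto simp: D)[4]
  apply (rule own_cont[where d=0 and q=1])
  using assms(2) apply (auto simp: D)[3]
  apply (rule opp_unique[where d=1 and q=2])
  using assms(2) apply (auto simp: D)[4]
  apply (rule own_end[where d=0 and q=2])
  using assms apply (auto simp: D E4_def)
  done

lemma win_E3: assumes "E3 a b c > 0" "ec \<in> {EC4,EC5}"
  shows "forces ec 2 (wt a b c) True (\<lambda>x. x > 0) init"
  apply (rule own_cont[where d=0 and q=3])
  using assms(2) apply (auto simp: D)[3]
  apply (rule opp_unique[where d=1 and q=2])
  using assms(2) apply (auto simp: D)[4]
  apply (rule own_end[where d=0 and q=2])
  using assms apply (auto simp: D E3_def)
  done

lemma win_E2: assumes "E2 a b c > 0" "ec \<in> {EC1 3,EC4,EC5}"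
  shows "forces ec 2 (wt a b c) True (\<lambda>x. x > 0) init"
  apply (rule own_cont[where d=0 and q=3])
  using assms(2) apply (auto simp: D)[3]
  apply (rule opp_unique[where d=1 and q=2])
  using assms(2) apply (auto simp: D)[4]
  apply (rule own_cont[where d=0 and q=1])
  using assms(2) apply (auto simp: D)[3]
  apply (rule opp_unique[where d=1 and q=3])
  using assms(2) apply (auto simp: D)[4]
  apply (rule own_end[where d=0 and q=3])
  using assms apply (auto simp: D E2_def)
  done


definition qsel :: "state \<Rightarrow> nat" where
  "qsel s = (if s = init then 2 else 6 - conf s 0 - conf s 1)"

lemma stepB:
  assumes "inv2 a b c s" "aturn s" "ec \<in> {EC1 3, EC2, EC3, EC4, EC5}"
  shows "allowed ec 2 s 0 (qsel s) \<and> \<not> ends ec 2 s 0 (qsel s)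
     \<and> inv2 a b c (next_state 2 (wt a b c) s 0 (qsel s))"
  using assms
  unfolding inv2_def pat_def allowed_def legal_def ends_def next_state_def qsel_def
  apply (simp add: less2 tower2 init_def)
  apply (elim disjE conjE)
  apply (auto simp: algebra_simps init_def)
  done

lemma anh_nowin:
  assumes "forces ec 2 (wt a b c) True G s" "inv2 a b c s"
    "ec \<in> {EC1 3, EC2, EC3, EC4, EC5}" "\<forall>x\<in>EV a b c ec. \<not> G x"
  shows False
  using assms
proof (induction rule: forces.induct)
  case (own s d q)
  then show ?case using stepA[OF own.prems(1) own.hyps(2) own.prems(2)] by auto
next
  case (opp s)
  then obtain d q where "allowed ec 2 s d q" by blast
  then show ?case using stepA[OF opp.prems(1) _ opp.prems(2), of d q] opp by blast
qed

lemma bao_nowin: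
  assumes "forces ec 2 (wt a b c) False G s" "inv2 a b c s"
    "ec \<in> {EC1 3, EC2, EC3, EC4, EC5}"
  shows False
  using assms
proof (induction rule: forces.induct)
  case (own s d q)
  then show ?case using stepA[OF own.prems(1) own.hyps(2) own.prems(2)] by auto
next
  case (opp s)
  then have "aturn s" by simp
  from stepB[OF opp.prems(1) this opp.prems(2)] opp show ?case by blast
qed

lemma inv_init: "inv2 a b c init" by (simp add: inv2_def)

lemma draw2:
  assumes "ec \<in> {EC1 3, EC2, EC3, EC4, EC5}" "\<forall>x\<in>EV a b c ec. x \<le> 0"
  shows "is_draw ec 2 (wt a b c)"
  unfolding is_draw_def anh_wins_def bao_wins_def
  using anh_nowin[where G="\<lambda>x. x > 0", OF _ inv_init assms(1)] bao_nowin[OF _ inv_init assms(1)] assms(2)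
  by force


lemma less1: "(d::nat) < 1 \<longleftrightarrow> d = 0" by auto
lemmas D1 = allowed_def legal_def ends_def next_state_def init_def less1 tower1

lemma n1_own: assumes "ec \<in> {EC1 3, EC4, EC5}" "q = 3 \<or> (q = 2 \<and> ec \<noteq> EC1 3)" "G (wt a b c 1 q)"
  shows "forces ec 1 (wt a b c) True G init"
  apply (rule own_end[where d=0 and q=q])
  using assms by (auto simp: D1)

lemma n1_opp: assumes "ec \<in> {EC1 3, EC4, EC5}" "G b" "ec \<noteq> EC1 3 \<Longrightarrow> G a"
  shows "forces ec 1 (wt a b c) False G init"
  apply (rule forces.opp)
    apply (simp add: init_def)
  using assms apply (auto simp: D1)
  done

lemma part_b1:
  "(w13 > 0 \<longrightarrow> anh_wins (EC1 3) 1 (wt w12 w13 w23)) \<and>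
      (w13 < 0 \<longrightarrow> bao_wins (EC1 3) 1 (wt w12 w13 w23)) \<and>
      (w13 = 0 \<longrightarrow> is_tie (EC1 3) 1 (wt w12 w13 w23))"
  unfolding anh_wins_def bao_wins_def is_tie_def
  using n1_own[of "EC1 3" 3 "\<lambda>x. x > 0" w12 w13 w23] n1_own[of "EC1 3" 3 "\<lambda>x. x \<ge> 0" w12 w13 w23]
    n1_opp[of "EC1 3" "\<lambda>x. x < 0" w13 w12 w23] n1_opp[of "EC1 3" "\<lambda>x. x \<le> 0" w13 w12 w23]
  by auto

lemma part_b2: assumes "ec \<in> {EC4, EC5}" shows
      "(w12 < 0 \<and> w13 < 0 \<longrightarrow> bao_wins ec 1 (wt w12 w13 w23)) \<and>
      ((w12 = 0 \<or> w13 = 0) \<and> w12 \<le> 0 \<and> w13 \<le> 0 \<longrightarrow> is_tie ec 1 (wt w12 w13 w23)) \<and>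
      (\<not> (w12 < 0 \<and> w13 < 0) \<and> \<not> ((w12 = 0 \<or> w13 = 0) \<and> w12 \<le> 0 \<and> w13 \<le> 0)
         \<longrightarrow> anh_wins ec 1 (wt w12 w13 w23))"
proof -
  have e: "ec \<in> {EC1 3, EC4, EC5}" "ec \<noteq> EC1 3" using assms by auto
  show ?thesis
  unfolding anh_wins_def bao_wins_def is_tie_def
  using n1_own[OF e(1), of 3 "\<lambda>x. x > 0" w12 w13 w23] n1_own[OF e(1), of 2 "\<lambda>x. x > 0" w12 w13 w23]
    n1_own[OF e(1), of 3 "\<lambda>x. x \<ge> 0" w12 w13 w23] n1_own[OF e(1), of 2 "\<lambda>x. x \<ge> 0" w12 w13 w23]
    n1_opp[OF e(1), of "\<lambda>x. x < 0" w13 w12 w23] n1_opp[OF e(1), of "\<lambda>x. x \<le> 0" w13 w12 w23] e(2)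
  by auto
qed

theorem theorem3:
  fixes w12 w13 w23 :: real
  defines "W \<equiv> wt w12 w13 w23"
  shows
  \<comment> \<open>(a) n = 2\<close>
  "(\<forall>ec \<in> {EC4, EC5}.
      (w12 + w23 - w13 > 0 \<or> 3 * w13 - w12 - w23 > 0 \<or> w13 + w23 - w12 > 0 \<or>
       3 * w12 - w13 - w23 > 0 \<or> w12 + w13 - w23 > 0 \<longrightarrow> anh_wins ec 2 W) \<and>
      (\<not> (w12 + w23 - w13 > 0 \<or> 3 * w13 - w12 - w23 > 0 \<or> w13 + w23 - w12 > 0 \<or>
          3 * w12 - w13 - w23 > 0 \<or> w12 + w13 - w23 > 0) \<longrightarrow> is_draw ec 2 W))
   \<and> (\<forall>ec \<in> {EC2, EC3}.
      (w12 + w13 - w23 > 0 \<longrightarrow> anh_wins ec 2 W) \<and>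
      (\<not> (w12 + w13 - w23 > 0) \<longrightarrow> is_draw ec 2 W))
   \<and> ((w12 + w23 - w13 > 0 \<or> 3 * w13 - w12 - w23 > 0 \<longrightarrow> anh_wins (EC1 3) 2 W) \<and>
      (\<not> (w12 + w23 - w13 > 0 \<or> 3 * w13 - w12 - w23 > 0) \<longrightarrow> is_draw (EC1 3) 2 W))
   \<comment> \<open>(b) n = 1\<close>
   \<and> ((w13 > 0 \<longrightarrow> anh_wins (EC1 3) 1 W) \<and>
      (w13 < 0 \<longrightarrow> bao_wins (EC1 3) 1 W) \<and>
      (w13 = 0 \<longrightarrow> is_tie (EC1 3) 1 W))
   \<and> (\<forall>ec \<in> {EC4, EC5}.
      (w12 < 0 \<and> w13 < 0 \<longrightarrow> bao_wins ec 1 W) \<and>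
      ((w12 = 0 \<or> w13 = 0) \<and> w12 \<le> 0 \<and> w13 \<le> 0 \<longrightarrow> is_tie ec 1 W) \<and>
      (\<not> (w12 < 0 \<and> w13 < 0) \<and> \<not> ((w12 = 0 \<or> w13 = 0) \<and> w12 \<le> 0 \<and> w13 \<le> 0)
         \<longrightarrow> anh_wins ec 1 W))"
proof -
  note E = E1_def E2_def E3_def E4_def E5_def
  have A1: "anh_wins ec 2 W" if ec: "ec \<in> {EC4, EC5}" and h: "w12 + w23 - w13 > 0 \<or> 3 * w13 - w12 - w23 > 0 \<or> w13 + w23 - w12 > 0 \<or>
       3 * w12 - w13 - w23 > 0 \<or> w12 + w13 - w23 > 0" for ec
  proof -
    have e1: "ec \<in> {EC1 3, EC4, EC5}" "ec \<in> {EC4, EC5}" "ec \<in> {EC2, EC3, EC4, EC5}" using ec by auto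
    from h show ?thesis unfolding anh_wins_def W_def
    proof (elim disjE)
      assume "w12 + w23 - w13 > 0" then show "forces ec 2 (wt w12 w13 w23) True ((<) 0) init"
        using win_E1[OF _ e1(1)] by (simp add: E1_def)
    next
      assume "3 * w13 - w12 - w23 > 0" then show "forces ec 2 (wt w12 w13 w23) True ((<) 0) init"
        using win_E2[OF _ e1(1)] by (simp add: E2_def)
    next
      assume "w13 + w23 - w12 > 0" then show "forces ec 2 (wt w12 w13 w23) True ((<) 0) init"
        using win_E3[OF _ e1(2)] by (simp add: E3_def)
    next
      assume "3 * w12 - w13 - w23 > 0" then show "forces ec 2 (wt w12 w13 w23) True ((<) 0) init"
        using win_E4[OF _ e1(2)] by (simp add: E4_def)
    next
      assume "w12 + w13 - w23 > 0" then show "forces ec 2 (wt w12 w13 w23) True ((<) 0) init"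
        using win_E5[OF _ e1(3)] by (simp add: E5_def)
    qed
  qed
  have A2: "is_draw ec 2 W" if ec: "ec \<in> {EC4, EC5}" and h: "\<not> (w12 + w23 - w13 > 0 \<or> 3 * w13 - w12 - w23 > 0 \<or> w13 + w23 - w12 > 0 \<or>
       3 * w12 - w13 - w23 > 0 \<or> w12 + w13 - w23 > 0)" for ec
  proof -
    have e1: "ec \<in> {EC1 3, EC2, EC3, EC4, EC5}" using ec by auto
    have "\<forall>x\<in>EV w12 w13 w23 ec. x \<le> 0" using ec h by (auto simp: EV_def E)
    then show ?thesis unfolding W_def by (rule draw2[OF e1])
  qed
  have B1: "anh_wins ec 2 W" if ec: "ec \<in> {EC2, EC3}" and h: "w12 + w13 - w23 > 0" for ec
  proof -
    have e1: "ec \<in> {EC2, EC3, EC4, EC5}" using ec by auto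
    show ?thesis unfolding anh_wins_def W_def using h win_E5[OF _ e1] by (simp add: E5_def)
  qed
  have B2: "is_draw ec 2 W" if ec: "ec \<in> {EC2, EC3}" and h: "\<not> (w12 + w13 - w23 > 0)" for ec
  proof -
    have e1: "ec \<in> {EC1 3, EC2, EC3, EC4, EC5}" using ec by auto
    have "\<forall>x\<in>EV w12 w13 w23 ec. x \<le> 0" using ec h by (auto simp: EV_def E)
    then show ?thesis unfolding W_def by (rule draw2[OF e1])
  qed
  have C1: "anh_wins (EC1 3) 2 W" if h: "w12 + w23 - w13 > 0 \<or> 3 * w13 - w12 - w23 > 0"
  proof -
    have e1: "EC1 3 \<in> {EC1 3, EC4, EC5}" by simp
    from h show ?thesis unfolding anh_wins_def W_def
    proof (elim disjE)
      assume "w12 + w23 - w13 > 0" then show "forces (EC1 3) 2 (wt w12 w13 w23) True ((<) 0) init"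
        using win_E1[OF _ e1] by (simp add: E1_def)
    next
      assume "3 * w13 - w12 - w23 > 0" then show "forces (EC1 3) 2 (wt w12 w13 w23) True ((<) 0) init"
        using win_E2[OF _ e1] by (simp add: E2_def)
    qed
  qed
  have C2: "is_draw (EC1 3) 2 W" if h: "\<not> (w12 + w23 - w13 > 0 \<or> 3 * w13 - w12 - w23 > 0)"
  proof -
    have e1: "EC1 3 \<in> {EC1 3, EC2, EC3, EC4, EC5}" by simp
    have "\<forall>x\<in>EV w12 w13 w23 (EC1 3). x \<le> 0" using h by (auto simp: EV_def E)
    then show ?thesis unfolding W_def by (rule draw2[OF e1])
  qed
  have Bb1: "(w13 > 0 \<longrightarrow> anh_wins (EC1 3) 1 W) \<and>
      (w13 < 0 \<longrightarrow> bao_wins (EC1 3) 1 W) \<and>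
      (w13 = 0 \<longrightarrow> is_tie (EC1 3) 1 W)" unfolding W_def by (rule part_b1)
  have Bb2: "\<forall>ec \<in> {EC4, EC5}.
      (w12 < 0 \<and> w13 < 0 \<longrightarrow> bao_wins ec 1 W) \<and>
      ((w12 = 0 \<or> w13 = 0) \<and> w12 \<le> 0 \<and> w13 \<le> 0 \<longrightarrow> is_tie ec 1 W) \<and>
      (\<not> (w12 < 0 \<and> w13 < 0) \<and> \<not> ((w12 = 0 \<or> w13 = 0) \<and> w12 \<le> 0 \<and> w13 \<le> 0)
         \<longrightarrow> anh_wins ec 1 W)" unfolding W_def using part_b2 by blast
  show ?thesis
    apply (intro conjI)
    using A1 A2 apply blast
    using B1 B2 apply blast
    using C1 apply blast
    using C2 apply blast
    using Bb1 Bb2 apply blast+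
    done
qed

end
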